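(* Let $\Sigma^2\subset\widetilde{\mathbb{C}}$ be a domain with para-complex coordinate $z=u+jv$, let $(F,G)=(f^1+jf^2,\,g^1+jg^2):\Sigma^2\to\widetilde{\mathbb{C}}^2$ be para-holomorphic, and let $\psi:\Sigma^2\to\mathbb{R}^3$ be the indefinite generalized IA-map \[ \psi=\Bigl(f^1-g^1,\ f^2+g^2,\ -\int\bigl\{(f^1+g^1)(f^1_u-g^1_u)+(-f^2+g^2)(f^2_u+g^2_u)\bigr\}du+\bigl\{(f^1+g^1)(f^2_u-g^2_u)+(-f^2+g^2)(f^1_u+g^1_u)\bigr\}dv\Bigr). \] Then $p\in\Sigma^2$ is a singular point of $\psi$ (i.e. $\psi$ is not immersive at $p$) if and only if $|dF|=|dG|$ at $p$, i.e. $(f^1_u)^2-(f^2_u)^2=(g^1_u)^2-(g^2_u)^2$ at $p$.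
   Context: $\widetilde{\mathbb{C}}=\{a+jb\}$ with $j^2=1$, $|u+jv|=u^2-v^2$. $F=f^1+jf^2$ is para-holomorphic if $f^1_u=f^2_v$, $f^1_v=f^2_u$; $|dF|$ denotes $|F'|$ with $F'=f^1_u+jf^2_u$. The third component is a locally defined primitive of a closed $1$-form. *)

theory Defs
  imports "HOL-Analysis.Analysis"
begin

text \<open>Para-complex plane identified with real pairs: z = u + j v is (u, v).\<close>

definition pu :: "(real \<times> real \<Rightarrow> real) \<Rightarrow> real \<times> real \<Rightarrow> real" where
  "pu f p = frechet_derivative f (at p) (1, 0)"

definition pv :: "(real \<times> real \<Rightarrow> real) \<Rightarrow> real \<times> real \<Rightarrow> real" where
  "pv f p = frechet_derivative f (at p) (0, 1)"

definition para_holomorphic_on ::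
  "(real \<times> real \<Rightarrow> real) \<Rightarrow> (real \<times> real \<Rightarrow> real) \<Rightarrow> (real \<times> real) set \<Rightarrow> bool" where
  "para_holomorphic_on f1 f2 S \<longleftrightarrow>
     (\<forall>p\<in>S. f1 differentiable (at p) \<and> f2 differentiable (at p) \<and>
            pu f1 p = pv f2 p \<and> pv f1 p = pu f2 p)"

definition immersive_at ::
  "(real \<times> real \<Rightarrow> real \<times> real \<times> real) \<Rightarrow> real \<times> real \<Rightarrow> bool" where
  "immersive_at \<psi> p \<longleftrightarrow> \<psi> differentiable (at p) \<and> inj (frechet_derivative \<psi> (at p))"

end

theory Submission
  imports Defs
begin

lemma fd_coords:
  assumes "f differentiable (at p)"
  shows "frechet_derivative f (at p) = (\<lambda>v. fst v * pu f p + snd v * pv f p)"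
proof
  fix v :: "real \<times> real"
  have lin: "linear (frechet_derivative f (at p))"
    using assms frechet_derivative_works has_derivative_linear by blast
  have v: "v = fst v *\<^sub>R (1,0) + snd v *\<^sub>R (0,1)" by (cases v) simp
  show "frechet_derivative f (at p) v = fst v * pu f p + snd v * pv f p"
  proof -
    have "frechet_derivative f (at p) v = frechet_derivative f (at p) (fst v *\<^sub>R (1,0) + snd v *\<^sub>R (0,1))"
      using v by metis
    also have "\<dots> = fst v *\<^sub>R frechet_derivative f (at p) (1,0) + snd v *\<^sub>R frechet_derivative f (at p) (0,1)"
      using lin by (simp only: linear_add linear_scale)
    finally show ?thesis by (simp add: pu_def pv_def)
  qed
qed

lemma hd_coords:
  assumes "f differentiable (at p)"
  shows "(f has_derivative (\<lambda>v. fst v * pu f p + snd v * pv f p)) (at p)"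
  using assms fd_coords frechet_derivative_works by metis

lemma inj_lemma:
  fixes a b c d X Y :: real
  shows "inj (\<lambda>v::real\<times>real. (fst v * (a-c) + snd v * (b-d), fst v * (b+d) + snd v * (a+c),
      -(fst v * (X*(a-c)+Y*(b+d)) + snd v * (X*(b-d)+Y*(a+c))))) \<longleftrightarrow>
    (a-c)*(a+c) - (b-d)*(b+d) \<noteq> 0" (is "inj ?D \<longleftrightarrow> ?det \<noteq> 0")
proof
  assume i: "inj ?D"
  show "?det \<noteq> 0"
  proof
    assume z: "?det = 0"
    obtain w :: "real \<times> real" where w: "w \<noteq> 0" "?D w = ?D 0"
    proof (cases "b-d = 0 \<and> a-c = 0")
      case True
      show ?thesis
      proof (cases "a+c = 0 \<and> b+d = 0")
        case True
        with \<open>b-d = 0 \<and> a-c = 0\<close> show ?thesis by (intro that[of "(1,0)"]) (auto simp: algebra_simps zero_prod_def)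
      next
        case False
        have "(a+c)*(a+c) + (b+d)*(b+d) \<noteq> 0" using False
          by (simp add: sum_squares_eq_zero_iff)
        then show ?thesis using True
          by (intro that[of "(a+c, -(b+d))"]) (auto simp: algebra_simps zero_prod_def)
      qed
    next
      case False
      have e: "(a-c)*(a+c) = (b-d)*(b+d)" using z by simp
      have e': "a*a+d*d = b*b+c*c" using e by (simp add: algebra_simps)
      have e3: "Y*(a*a)+Y*(d*d) = Y*(b*b)+Y*(c*c)" by (metis e' distrib_left)
      show ?thesis
      proof (rule that[of "(b-d, -(a-c))"])
        show "(b-d, -(a-c)) \<noteq> 0" using False by (auto simp add: zero_prod_def)
        show "?D (b-d, -(a-c)) = ?D 0" using e' e3 by (simp add: algebra_simps)
      qed
    qed
    with i show False by (meson injD)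
  qed
next
  assume nz: "?det \<noteq> 0"
  show "inj ?D"
  proof (rule injI)
    fix v w :: "real \<times> real"
    assume "?D v = ?D w"
    then have e1: "(fst v - fst w)*(a-c) + (snd v - snd w)*(b-d) = 0"
      and e2: "(fst v - fst w)*(b+d) + (snd v - snd w)*(a+c) = 0"
      by (auto simp: algebra_simps)
    define x where "x = fst v - fst w"
    define y where "y = snd v - snd w"
    have e1': "x*(a-c) + y*(b-d) = 0" and e2': "x*(b+d) + y*(a+c) = 0"
      using e1 e2 x_def y_def by auto
    have "x * ?det = 0"
    proof -
      have "x * ?det = (x*(a-c) + y*(b-d))*(a+c) - (x*(b+d) + y*(a+c))*(b-d)"
        by (simp add: algebra_simps)
      then show ?thesis using e1' e2' by simp
    qed
    moreover have "y * ?det = 0"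
    proof -
      have "y * ?det = (x*(b+d) + y*(a+c))*(a-c) - (x*(a-c) + y*(b-d))*(b+d)"
        by (simp add: algebra_simps)
      then show ?thesis using e1' e2' by simp
    qed
    ultimately have "x = 0" "y = 0" using nz by auto
    then show "v = w" unfolding x_def y_def by (simp add: prod_eq_iff)
  qed
qed

theorem mainTheorem4:
  fixes f1 f2 g1 g2 h :: "real \<times> real \<Rightarrow> real"
    and S U :: "(real \<times> real) set" and p :: "real \<times> real"
  assumes "open S" and "connected S"
    and "para_holomorphic_on f1 f2 S" and "para_holomorphic_on g1 g2 S"
    and "open U" and "U \<subseteq> S" and "p \<in> U"
    and "\<forall>q\<in>U. (h has_derivative (\<lambda>(a, b).
            - (a * ((f1 q + g1 q) * (pu f1 q - pu g1 q) + (- f2 q + g2 q) * (pu f2 q + pu g2 q))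
             + b * ((f1 q + g1 q) * (pu f2 q - pu g2 q) + (- f2 q + g2 q) * (pu f1 q + pu g1 q)))))
          (at q)"
  shows "\<not> immersive_at (\<lambda>q. (f1 q - g1 q, f2 q + g2 q, h q)) p \<longleftrightarrow>
         (pu f1 p)\<^sup>2 - (pu f2 p)\<^sup>2 = (pu g1 p)\<^sup>2 - (pu g2 p)\<^sup>2"
proof -
  have pS: "p \<in> S" using assms(6,7) by blast
  obtain df1: "f1 differentiable (at p)" and df2: "f2 differentiable (at p)"
    and h1: "pu f1 p = pv f2 p" and h2: "pv f1 p = pu f2 p"
    using assms(3) pS unfolding para_holomorphic_on_def by blast
  obtain dg1: "g1 differentiable (at p)" and dg2: "g2 differentiable (at p)"
    and k1: "pu g1 p = pv g2 p" and k2: "pv g1 p = pu g2 p"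
    using assms(4) pS unfolding para_holomorphic_on_def by blast
  define a where "a = pu f1 p"
  define b where "b = pu f2 p"
  define c where "c = pu g1 p"
  define d where "d = pu g2 p"
  define X where "X = f1 p + g1 p"
  define Y where "Y = - f2 p + g2 p"
  have hh: "(h has_derivative (\<lambda>v. -(fst v * (X*(a-c)+Y*(b+d)) + snd v * (X*(b-d)+Y*(a+c))))) (at p)"
    unfolding a_def b_def c_def d_def X_def Y_def
    using bspec[OF assms(8) assms(7)] by (simp add: case_prod_unfold)
  have F1: "(f1 has_derivative (\<lambda>v. fst v * a + snd v * b)) (at p)"
    using hd_coords[OF df1] h2 a_def b_def by simp
  have F2: "(f2 has_derivative (\<lambda>v. fst v * b + snd v * a)) (at p)"
    using hd_coords[OF df2] h1 a_def b_def by simp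
  have G1: "(g1 has_derivative (\<lambda>v. fst v * c + snd v * d)) (at p)"
    using hd_coords[OF dg1] k2 c_def d_def by simp
  have G2: "(g2 has_derivative (\<lambda>v. fst v * d + snd v * c)) (at p)"
    using hd_coords[OF dg2] k1 c_def d_def by simp
  have P: "((\<lambda>q. (f1 q - g1 q, f2 q + g2 q, h q)) has_derivative
     (\<lambda>v. ((fst v * a + snd v * b) - (fst v * c + snd v * d),
           (fst v * b + snd v * a) + (fst v * d + snd v * c),
           -(fst v * (X*(a-c)+Y*(b+d)) + snd v * (X*(b-d)+Y*(a+c)))))) (at p)"
    by (intro has_derivative_Pair has_derivative_diff has_derivative_add F1 F2 G1 G2 hh)
  have eqD: "(\<lambda>v::real\<times>real. ((fst v * a + snd v * b) - (fst v * c + snd v * d),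
           (fst v * b + snd v * a) + (fst v * d + snd v * c),
           -(fst v * (X*(a-c)+Y*(b+d)) + snd v * (X*(b-d)+Y*(a+c)))))
     = (\<lambda>v. (fst v * (a-c) + snd v * (b-d), fst v * (b+d) + snd v * (a+c),
      -(fst v * (X*(a-c)+Y*(b+d)) + snd v * (X*(b-d)+Y*(a+c)))))"
    by (auto simp: algebra_simps)
  have "immersive_at (\<lambda>q. (f1 q - g1 q, f2 q + g2 q, h q)) p \<longleftrightarrow>
        (a-c)*(a+c) - (b-d)*(b+d) \<noteq> 0"
  proof -
    have fe: "frechet_derivative (\<lambda>q. (f1 q - g1 q, f2 q + g2 q, h q)) (at p) =
      (\<lambda>v. (fst v * (a-c) + snd v * (b-d), fst v * (b+d) + snd v * (a+c),
      -(fst v * (X*(a-c)+Y*(b+d)) + snd v * (X*(b-d)+Y*(a+c)))))"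
      using frechet_derivative_at[OF P] eqD by simp
    have "(\<lambda>q. (f1 q - g1 q, f2 q + g2 q, h q)) differentiable (at p)"
      using P by (rule differentiableI)
    then show ?thesis unfolding immersive_at_def fe using inj_lemma[of a c b d X Y] by simp
  qed
  moreover have "(a-c)*(a+c) - (b-d)*(b+d) = 0 \<longleftrightarrow> a\<^sup>2 - b\<^sup>2 = c\<^sup>2 - d\<^sup>2"
    by (simp add: algebra_simps power2_eq_square)
  ultimately show ?thesis using a_def b_def c_def d_def by auto
qed

end
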